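(* For any $s\in\mathcal S=\{s\in\mathbb R^b:1\ge s_1\ge\cdots\ge s_b\ge0\}$, the matrix $J(s)$ is invertible.
   Context: Let $b\ge1$ be an integer and $\lambda=1-\gamma/N^{\alpha}$ with $N\ge1$, $\gamma\in(0,1]$, $\alpha>0$ (so $0\le\lambda<1$). $J(s)$ is the $b\times b$ tridiagonal matrix (the Jacobian of the mean-field vector field $f_k(s)=\lambda(s_{k-1}^2-s_k^2)-(s_k-s_{k+1})$, $s_0=1$, $s_{b+1}=0$) with diagonal entries $J_{kk}=-2\lambda s_k-1$ ($k=1,\dots,b$), superdiagonal entries $J_{k,k+1}=1$ and subdiagonal entries $J_{k+1,k}=2\lambda s_k$ ($k=1,\dots,b-1$). *)

theory Defs
  imports "Jordan_Normal_Form.Matrix" "Jordan_Normal_Form.Determinant"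
begin

text \<open>The vector s is given as a function
  nat => real with s k the k-th component (1-based, k = 1..b). Matrix rows/columns
  are 0-based, so row i corresponds to index k = i+1.
  Diagonal J_kk = -2 lam s_k - 1, superdiagonal J_{k,k+1} = 1, subdiagonal
  J_{k+1,k} = 2 lam s_k.\<close>
definition Jmat :: "nat \<Rightarrow> real \<Rightarrow> (nat \<Rightarrow> real) \<Rightarrow> real mat" where
  "Jmat b lam s = mat b b (\<lambda>(i, j).
     if j = i then - 2 * lam * s (i + 1) - 1
     else if j = i + 1 then 1
     else if i = j + 1 then 2 * lam * s (j + 1)
     else 0)"

end

theory Submission
  imports Defs
begin

lemma det_nz_invertible:
  assumes A: "(A :: real mat) \<in> carrier_mat n n" and d: "det A \<noteq> 0"
  shows "invertible_mat A"
proof -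
  have "A \<in> Units (ring_mat TYPE(real) n ())" by (rule det_non_zero_imp_unit[OF A d])
  then obtain B where B: "B \<in> carrier_mat n n" "B * A = 1\<^sub>m n" "A * B = 1\<^sub>m n"
    unfolding Units_def ring_mat_def by auto
  show ?thesis unfolding invertible_mat_def inverts_mat_def using A B by auto
qed

lemma Jmat_row:
  fixes v :: "real vec"
  assumes v: "v \<in> carrier_vec b" and i: "i < b"
  shows "(Jmat b lam s *\<^sub>v v) $ i =
     (if 0 < i then 2 * lam * s i * v $ (i - 1) else 0)
     - (2 * lam * s (i + 1) + 1) * v $ i
     + (if i + 1 < b then v $ (i + 1) else 0)"
proof -
  have "(Jmat b lam s *\<^sub>v v) $ i = (\<Sum>j<b. (Jmat b lam s) $$ (i, j) * v $ j)"
    using v i unfolding Jmat_def by (auto simp: mult_mat_vec_def scalar_prod_def lessThan_atLeast0)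
  also have "\<dots> = (\<Sum>j<b. (if j = i then (- 2 * lam * s (i + 1) - 1) * v $ j else 0)
       + (if j = i + 1 then v $ j else 0)
       + (if i = j + 1 then 2 * lam * s (j + 1) * v $ j else 0))"
    by (rule sum.cong) (use i in \<open>auto simp: Jmat_def\<close>)
  also have "\<dots> = (if 0 < i then 2 * lam * s i * v $ (i - 1) else 0)
     - (2 * lam * s (i + 1) + 1) * v $ i
     + (if i + 1 < b then v $ (i + 1) else 0)"
  proof -
    have e3: "(\<Sum>j<b. (if i = j + 1 then 2 * lam * s (j + 1) * v $ j else 0))
        = (if 0 < i then 2 * lam * s i * v $ (i - 1) else 0)"
    proof (cases "0 < i")
      case True
      have "(\<Sum>j<b. (if i = j + 1 then 2 * lam * s (j + 1) * v $ j else 0))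
          = (\<Sum>j<b. (if j = i - 1 then 2 * lam * s (j + 1) * v $ j else 0))"
        by (rule sum.cong) (use True in auto)
      also have "\<dots> = 2 * lam * s i * v $ (i - 1)" using True i by (simp add: sum.delta)
      finally show ?thesis using True by simp
    qed simp
    show ?thesis using i by (simp only: sum.distrib e3) (simp add: sum.delta algebra_simps)
  qed
  finally show ?thesis .
qed

theorem lemma4:
  fixes b N :: nat and \<gamma> \<alpha> :: real and s :: "nat \<Rightarrow> real"
  assumes "b \<ge> 1" and "N \<ge> 1" and "0 < \<gamma>" and "\<gamma> \<le> 1" and "\<alpha> > 0"
    and "s 1 \<le> 1"
    and "\<And>k. 1 \<le> k \<Longrightarrow> k < b \<Longrightarrow> s (k + 1) \<le> s k"
    and "s b \<ge> 0"
  shows "invertible_mat (Jmat b (1 - \<gamma> / real N powr \<alpha>) s)"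
proof -
  define lam where "lam = 1 - \<gamma> / real N powr \<alpha>"
  have "real N powr \<alpha> \<ge> 1" using assms(2,5) by (simp add: ge_one_powr_ge_zero)
  hence lam0: "lam \<ge> 0" unfolding lam_def using assms(3,4)
    by (auto simp: divide_le_eq_1)
  have sdec: "s k \<ge> s b" if "1 \<le> k" "k \<le> b" for k
    using that
  proof (induction "b - k" arbitrary: k)
    case 0 then show ?case by simp
  next
    case (Suc m)
    then have "s (k+1) \<ge> s b" by simp
    moreover have "s (k+1) \<le> s k" using assms(7) Suc by auto
    ultimately show ?case by simp
  qed
  define a where "a k = 2 * lam * s k" for k
  have a0: "a k \<ge> 0" if "1 \<le> k" "k \<le> b" for k
    unfolding a_def using sdec[OF that] assms(8) lam0 by simp
  have JC: "Jmat b lam s \<in> carrier_mat b b" unfolding Jmat_def by simp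
  have "det (Jmat b lam s) \<noteq> 0"
  proof
    assume "det (Jmat b lam s) = 0"
    then obtain v where v: "v \<in> carrier_vec b" "v \<noteq> 0\<^sub>v b" "Jmat b lam s *\<^sub>v v = 0\<^sub>v b"
      using det_0_iff_vec_prod_zero_field[OF JC] by blast
    define w where "w j = (if j < b then v $ j else 0)" for j
    define c where "c = w 0"
    have row: "(if 0 < i then a i * w (i - 1) else 0) - (a (i + 1) + 1) * w i + w (i + 1) = 0"
      if "i < b" for i
    proof -
      have "(Jmat b lam s *\<^sub>v v) $ i = 0" using v(3) that by simp
      then show ?thesis using Jmat_row[OF v(1) that, of lam s] that
        by (auto simp: w_def a_def)
    qed
    have rec: "w (k + 1) = c + a (k + 1) * w k" if "k < b" for k
      using that
    proof (induction k)
      case 0 then show ?case using row[of 0] by (simp add: c_def algebra_simps)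
    next
      case (Suc k)
      then have "w (k + 1) = c + a (k + 1) * w k" by simp
      moreover have "a (k + 1) * w k - (a (k + 2) + 1) * w (k + 1) + w (k + 2) = 0"
        using row[of "k+1"] Suc by simp
      ultimately show ?case by (simp add: algebra_simps)
    qed
    have pos: "c * w k \<ge> c^2" if "k < b" for k
      using that
    proof (induction k)
      case 0 then show ?case by (simp add: c_def power2_eq_square)
    next
      case (Suc k)
      have "c * w (Suc k) = c^2 + a (k + 1) * (c * w k)"
        using rec[of k] Suc by (simp add: algebra_simps power2_eq_square)
      moreover have "a (k + 1) * (c * w k) \<ge> 0"
      proof -
        have "c * w k \<ge> 0" using Suc zero_le_power2[of c] by linarith
        then show ?thesis using a0[of "k+1"] Suc.prems by simp
      qed
      ultimately show ?case by simp
    qed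
    have "0 = c * w b" by (simp add: w_def)
    also have "\<dots> = c^2 + a b * (c * w (b - 1))"
      using rec[of "b - 1"] assms(1) by (simp add: algebra_simps power2_eq_square)
    finally have "c^2 + a b * (c * w (b - 1)) = 0" by simp
    moreover have "a b * (c * w (b - 1)) \<ge> 0"
    proof -
      have "c * w (b - 1) \<ge> 0" using pos[of "b - 1"] assms(1) zero_le_power2[of c] by linarith
      then show ?thesis using a0[of b] assms(1) by simp
    qed
    ultimately have c0: "c = 0" by (smt (verit) zero_le_power2 power_zero_numeral zero_eq_power2)
    have "w k = 0" for k
    proof (induction k)
      case 0 then show ?case using c0 c_def by simp
    next
      case (Suc k)
      show ?case
      proof (cases "k < b")
        case True then show ?thesis using rec[of k] Suc c0 by simp
      next
        case False then show ?thesis by (simp add: w_def)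
      qed
    qed
    then have "v = 0\<^sub>v b" using v(1) by (intro eq_vecI) (auto simp: w_def dest: spec[of _ "_"] , metis w_def)
    with v(2) show False by simp
  qed
  then show ?thesis unfolding lam_def[symmetric] by (rule det_nz_invertible[OF JC])
qed

end
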